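(* Let $V$ be a vector space and let $\Phi_1,\Phi_2:\mathcal{P}(V)\to[0,\infty]$ satisfy, for $i=1,2$: (1) $\Phi_i(\lambda A)=|\lambda|\Phi_i(A)$ for all $A\subseteq V$, $\lambda\in\mathbb{R}$; (2) $A\subseteq B\subseteq V$ implies $\Phi_i(A)\le\Phi_i(B)$; (3) $\Phi_i(\bigcup_{n=1}^\infty A_n)\le\sum_{n=1}^\infty\Phi_i(A_n)$ for all $A_1,A_2,\ldots\subseteq V$. If for every $n\ge1$ there is a subset $B_n\subseteq V$ with $\Phi_1(B_n)\le1$ and $\Phi_2(B_n)\ge c_n$, where $c_n\uparrow\infty$, then there exists a set $A\subseteq V$ with $\Phi_1(A)\le1$ and $\Phi_2(A)=\infty$.
   Context: $\mathcal{P}(V)$ denotes the power set of $V$; $\lambda A=\{\lambda a:a\in A\}$. *)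

theory Defs
  imports "HOL-Analysis.Analysis"
begin

definition admissible_setfun :: "('a::real_vector set \<Rightarrow> ennreal) \<Rightarrow> bool" where
  "admissible_setfun \<Phi> \<longleftrightarrow>
     (\<forall>A (l::real). \<Phi> ((\<lambda>a. l *\<^sub>R a) ` A) = ennreal \<bar>l\<bar> * \<Phi> A) \<and>
     (\<forall>A B. A \<subseteq> B \<longrightarrow> \<Phi> A \<le> \<Phi> B) \<and>
     (\<forall>An :: nat \<Rightarrow> 'a set. \<Phi> (\<Union>n. An n) \<le> (\<Sum>n. \<Phi> (An n)))"

end

theory Submission
  imports Defs
begin

theorem mainTheorem4:
  fixes \<Phi>1 \<Phi>2 :: "'a::real_vector set \<Rightarrow> ennreal"
    and c :: "nat \<Rightarrow> real" and B :: "nat \<Rightarrow> 'a set"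
  assumes "admissible_setfun \<Phi>1" and "admissible_setfun \<Phi>2"
    and "incseq c" and "filterlim c at_top sequentially"
    and "\<And>n. n \<ge> 1 \<Longrightarrow> \<Phi>1 (B n) \<le> 1 \<and> \<Phi>2 (B n) \<ge> ennreal (c n)"
  shows "\<exists>A. \<Phi>1 A \<le> 1 \<and> \<Phi>2 A = \<infinity>"
proof -
  have ex: "\<exists>n. n \<ge> 1 \<and> c n \<ge> 4 ^ Suc k" for k
  proof -
    have "\<forall>\<^sub>F n in sequentially. c n \<ge> 4 ^ Suc k"
      using assms(4) by (simp add: filterlim_at_top)
    moreover have "\<forall>\<^sub>F n in sequentially. n \<ge> (1::nat)"
      by (simp add: eventually_ge_at_top)
    ultimately have "\<forall>\<^sub>F n in sequentially. n \<ge> 1 \<and> c n \<ge> 4 ^ Suc k"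
      by eventually_elim auto
    then show ?thesis using eventually_sequentially by auto
  qed
  define m where "m k = (SOME n. n \<ge> 1 \<and> c n \<ge> 4 ^ Suc k)" for k
  have m: "m k \<ge> 1 \<and> c (m k) \<ge> 4 ^ Suc k" for k
    unfolding m_def by (rule someI_ex[OF ex])
  define s where "s k = (1/2::real) ^ Suc k" for k
  have s0: "s k \<ge> 0" for k by (simp add: s_def)
  define An where "An k = (\<lambda>a. s k *\<^sub>R a) ` B (m k)" for k
  define A where "A = (\<Union>k. An k)"
  have h1: "\<Phi>1 ((\<lambda>a. l *\<^sub>R a) ` X) = ennreal \<bar>l\<bar> * \<Phi>1 X"
    and mono1: "X \<subseteq> Y \<Longrightarrow> \<Phi>1 X \<le> \<Phi>1 Y"
    and sub1: "\<Phi>1 (\<Union>n. F n) \<le> (\<Sum>n. \<Phi>1 (F n))" for l X Y F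
    using assms(1) unfolding admissible_setfun_def by blast+
  have h2: "\<Phi>2 ((\<lambda>a. l *\<^sub>R a) ` X) = ennreal \<bar>l\<bar> * \<Phi>2 X"
    and mono2: "X \<subseteq> Y \<Longrightarrow> \<Phi>2 X \<le> \<Phi>2 Y" for l X Y
    using assms(2) unfolding admissible_setfun_def by blast+
  have "\<Phi>1 A \<le> (\<Sum>k. \<Phi>1 (An k))" unfolding A_def by (rule sub1)
  also have "\<dots> \<le> (\<Sum>k. ennreal (s k))"
  proof (rule suminf_le)
    fix k
    have "\<Phi>1 (An k) = ennreal (s k) * \<Phi>1 (B (m k))"
      unfolding An_def h1 using s0 by simp
    also have "\<dots> \<le> ennreal (s k) * 1"
      using assms(5)[of "m k"] m[of k] by (intro mult_left_mono) auto
    finally show "\<Phi>1 (An k) \<le> ennreal (s k)" by simp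
  qed auto
  also have "\<dots> = ennreal 1"
    unfolding s_def by (rule suminf_ennreal_eq[OF zero_le_power power_half_series]) auto
  finally have A1: "\<Phi>1 A \<le> 1" by simp
  have big: "\<Phi>2 A \<ge> ennreal (2 ^ Suc k)" for k
  proof -
    have "ennreal (2 ^ Suc k) = ennreal (s k * 4 ^ Suc k)"
      by (simp add: s_def power_divide flip: power_mult_distrib) (simp add: power_mult_distrib[symmetric] field_simps)
    also have "\<dots> \<le> ennreal (s k) * ennreal (c (m k))"
    proof -
      have c0: "c (m k) \<ge> 0" using m[of k] by (meson order_trans zero_le_power zero_le_numeral)
      have "s k * 4 ^ Suc k \<le> s k * c (m k)" using m[of k] s0[of k] by (intro mult_left_mono) auto
      then show ?thesis using c0 s0[of k] by (simp add: ennreal_mult[symmetric] ennreal_leI del: power_Suc)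
    qed
    also have "\<dots> \<le> ennreal (s k) * \<Phi>2 (B (m k))"
      using assms(5)[of "m k"] m[of k] by (intro mult_left_mono) auto
    also have "\<dots> = \<Phi>2 (An k)" unfolding An_def h2 using s0 by simp
    also have "\<dots> \<le> \<Phi>2 A" unfolding A_def by (rule mono2) auto
    finally show ?thesis .
  qed
  have "\<Phi>2 A = \<infinity>"
  proof (rule ccontr)
    assume "\<Phi>2 A \<noteq> \<infinity>"
    then obtain r where r: "\<Phi>2 A = ennreal r" "r \<ge> 0"
      using ennreal_cases by (metis infinity_ennreal_def)
    obtain k where "r < 2 ^ k" using real_arch_pow[of 2 r] by auto
    also have "(2::real) ^ k \<le> 2 ^ Suc k" by simp
    finally have "ennreal r < ennreal (2 ^ Suc k)" using r by (simp add: ennreal_lessI)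
    with big[of k] r show False by (metis leD)
  qed
  with A1 show ?thesis by blast
qed

end
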